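(* Let $\mathsf Y$ be a locally compact, separable metric space with its Borel $\sigma$-algebra and a measure $\nu$, and let $f_Y$ be a probability density on $\mathsf Y$ with respect to $\nu$. Let $G$ be a locally compact, separable metric topological group with identity $e$ and left-Haar measure $\omega_l$, acting continuously on the left of $\mathsf Y$ via $(g,y)\mapsto gy$ (so $ey=y$ and $(g_1g_2)y=g_1(g_2y)$). Let $\chi:G\to(0,\infty)$ be a multiplier such that $\nu$ is relatively left invariant with multiplier $\chi$. Suppose $m(y)=\int_G f_Y(gy)\chi(g)\omega_l(dg)$ is positive for all $y\in\mathsf Y$ and finite for $\nu$-almost all $y$. Let $R:L^2_0(f_Y)\to L^2_0(f_Y)$ be the operator $$(Rh)(y)=\frac{1}{m(y)}\int_G h(gy)f_Y(gy)\chi(g)\,\omega_l(dg).$$ If $\|R\|=1$, then $R$ is a projection onto the space of functions invariant under the group action; that is, $h\in L^2_0(f_Y)$ is in the range of $R$ if and only if $h(gy)=h(y)$ for all $g\in G$ and all $y\in\mathsf Y$.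
   Context: A multiplier is a continuous function $\chi:G\to(0,\infty)$ with $\chi(g_1g_2)=\chi(g_1)\chi(g_2)$ for all $g_1,g_2\in G$. The measure $\nu$ is relatively (left) invariant with multiplier $\chi$ if $\chi(g)\int_{\mathsf Y}\phi(gy)\nu(dy)=\int_{\mathsf Y}\phi(y)\nu(dy)$ for all $g\in G$ and all integrable $\phi$. $L^2_0(f_Y)$ is the Hilbert space of real functions square integrable and of mean zero with respect to $f_Y\,d\nu$. The operator $R$ is a self-adjoint, idempotent Markov operator on $L^2_0(f_Y)$. *)

theory Defs
  imports "HOL-Probability.Probability"
begin

(* The group G is a type 'g of class topological_group_add (a possibly
   NON-commutative group written additively: 0 = identity e, g1 + g2 = g1 g2). *)

definition left_haar_measure :: "'g::{topological_group_add,metric_space} measure \<Rightarrow> bool" where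
  "left_haar_measure \<omega> \<longleftrightarrow>
     sets \<omega> = sets borel \<and>
     (\<forall>K. compact K \<longrightarrow> emeasure \<omega> K < \<infinity>) \<and>
     (\<forall>U. open U \<and> U \<noteq> {} \<longrightarrow> emeasure \<omega> U > 0) \<and>
     (\<forall>g A. A \<in> sets borel \<longrightarrow> emeasure \<omega> ((\<lambda>x. g + x) ` A) = emeasure \<omega> A)"

definition multiplier :: "('g::{topological_group_add,metric_space} \<Rightarrow> real) \<Rightarrow> bool" where
  "multiplier chi \<longleftrightarrow> continuous_on UNIV chi \<and> (\<forall>g. chi g > 0) \<and>
     (\<forall>g1 g2. chi (g1 + g2) = chi g1 * chi g2)"

definition rel_left_invariant ::
  "'y measure \<Rightarrow> ('g \<Rightarrow> 'y \<Rightarrow> 'y) \<Rightarrow> ('g \<Rightarrow> real) \<Rightarrow> bool" where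
  "rel_left_invariant \<nu> act chi \<longleftrightarrow>
     (\<forall>g \<phi>. integrable \<nu> (\<phi> :: 'y \<Rightarrow> real) \<longrightarrow>
        integrable \<nu> (\<lambda>y. \<phi> (act g y)) \<and>
        chi g * (\<integral>y. \<phi> (act g y) \<partial>\<nu>) = (\<integral>y. \<phi> y \<partial>\<nu>))"

definition L20 :: "'y measure \<Rightarrow> ('y \<Rightarrow> real) \<Rightarrow> ('y \<Rightarrow> real) set" where
  "L20 \<nu> f = {h. h \<in> borel_measurable \<nu> \<and>
      integrable (density \<nu> f) (\<lambda>y. (h y)\<^sup>2) \<and>
      integrable (density \<nu> f) h \<and> (\<integral>y. h y \<partial>density \<nu> f) = 0}"

definition L2norm_sq :: "'y measure \<Rightarrow> ('y \<Rightarrow> real) \<Rightarrow> ('y \<Rightarrow> real) \<Rightarrow> ennreal" where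
  "L2norm_sq \<nu> f h = (\<integral>\<^sup>+ y. ennreal ((h y)\<^sup>2) \<partial>density \<nu> f)"

text \<open>Squared operator norm of an operator on L^2_0(f_Y); it equals 1 iff the norm equals 1.\<close>
definition opnorm_sq ::
  "'y measure \<Rightarrow> ('y \<Rightarrow> real) \<Rightarrow> (('y \<Rightarrow> real) \<Rightarrow> ('y \<Rightarrow> real)) \<Rightarrow> ennreal" where
  "opnorm_sq \<nu> f T = (SUP h \<in> {h \<in> L20 \<nu> f. L2norm_sq \<nu> f h \<le> 1}. L2norm_sq \<nu> f (T h))"

definition m_fun ::
  "'g measure \<Rightarrow> ('g \<Rightarrow> 'y \<Rightarrow> 'y) \<Rightarrow> ('y \<Rightarrow> real) \<Rightarrow> ('g \<Rightarrow> real) \<Rightarrow> 'y \<Rightarrow> ennreal" where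
  "m_fun \<omega> act f chi y = (\<integral>\<^sup>+ g. ennreal (f (act g y) * chi g) \<partial>\<omega>)"

text \<open>(R h)(y) = (1/m(y)) int_G h(gy) f(gy) chi(g) omega(dg); where m(y) = infinity
  (a nu-null set) the value is 0 by the convention 1/0 = 0 on reals.\<close>
definition R_op ::
  "'g measure \<Rightarrow> ('g \<Rightarrow> 'y \<Rightarrow> 'y) \<Rightarrow> ('y \<Rightarrow> real) \<Rightarrow> ('g \<Rightarrow> real) \<Rightarrow> ('y \<Rightarrow> real) \<Rightarrow> 'y \<Rightarrow> real" where
  "R_op \<omega> act f chi h y =
     (1 / enn2real (m_fun \<omega> act f chi y)) * (\<integral>g. h (act g y) * f (act g y) * chi g \<partial>\<omega>)"

end

theory Submission
  imports Defs
begin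


definition linv :: "'g::topological_group_add measure \<Rightarrow> bool" where
  "linv \<mu> \<longleftrightarrow> (\<forall>z (w::'g \<Rightarrow> ennreal). w \<in> borel_measurable borel \<longrightarrow>
      (\<integral>\<^sup>+x. w (z + x) \<partial>\<mu>) = (\<integral>\<^sup>+x. w x \<partial>\<mu>))"

lemma meas_add_left[measurable]: "(\<lambda>x::'g::topological_group_add. z + x) \<in> borel_measurable borel"
  by (intro borel_measurable_continuous_onI continuous_intros)

lemma meas_add_right[measurable]: "(\<lambda>x::'g::topological_group_add. x + z) \<in> borel_measurable borel"
  by (intro borel_measurable_continuous_onI continuous_intros)

lemma meas_uminus[measurable]: "(uminus::'g::topological_group_add \<Rightarrow> 'g) \<in> borel_measurable borel"
  by (intro borel_measurable_continuous_onI continuous_intros)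

lemma haar_linv:
  fixes \<omega> :: "'g::{topological_group_add,metric_space} measure"
  assumes "left_haar_measure \<omega>"
  shows "linv \<omega>"
  unfolding linv_def
proof (intro allI impI)
  fix z and w :: "'g \<Rightarrow> ennreal"
  assume w: "w \<in> borel_measurable borel"
  have sets: "sets \<omega> = sets borel" using assms by (simp add: left_haar_measure_def)
  have sp: "space \<omega> = UNIV" using sets_eq_imp_space_eq[OF sets] by simp
  have mz: "(\<lambda>x. z + x) \<in> measurable \<omega> borel"
    using measurable_cong_sets[OF sets refl] meas_add_left by blast
  have D: "distr \<omega> borel (\<lambda>x. z + x) = \<omega>"
  proof (rule measure_eqI)
    show "sets (distr \<omega> borel ((+) z)) = sets \<omega>" using sets by simp
    fix A assume "A \<in> sets (distr \<omega> borel ((+) z))"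
    hence A: "A \<in> sets borel" by simp
    have "(\<lambda>x. z + x) -` A \<inter> space \<omega> = (\<lambda>x. -z + x) ` A"
      by (auto simp: sp image_iff add.assoc[symmetric]) (metis minus_add_cancel)
    then show "emeasure (distr \<omega> borel ((+) z)) A = emeasure \<omega> A"
      using assms A mz by (simp add: emeasure_distr left_haar_measure_def)
  qed
  have "(\<integral>\<^sup>+x. w (z + x) \<partial>\<omega>) = (\<integral>\<^sup>+x. w x \<partial>distr \<omega> borel (\<lambda>x. z + x))"
    using mz w by (simp add: nn_integral_distr)
  then show "(\<integral>\<^sup>+x. w (z + x) \<partial>\<omega>) = (\<integral>\<^sup>+x. w x \<partial>\<omega>)" using D by simp
qed

lemma sigma_finite_lc:
  fixes M :: "'g::{metric_space,second_countable_topology} measure"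
  assumes lc: "locally_compact_space (euclidean :: 'g topology)"
    and sets: "sets M = sets borel"
    and fin: "\<And>K. compact K \<Longrightarrow> emeasure M K < \<infinity>"
  shows "sigma_finite_measure M"
proof
  let ?F = "{U::'g set. open U \<and> (\<exists>K. compact K \<and> U \<subseteq> K)}"
  have cov: "\<Union>?F = UNIV"
  proof -
    { fix x :: 'g
      from lc obtain U K where "open U" "compact K" "x \<in> U" "U \<subseteq> K"
        unfolding locally_compact_space_def by (metis UNIV_I open_openin topspace_euclidean compactin_euclidean_iff)
      hence "x \<in> \<Union>?F" by blast }
    thus ?thesis by blast
  qed
  obtain F' where F': "F' \<subseteq> ?F" "countable F'" "\<Union>F' = \<Union>?F"
    using Lindelof[of ?F] by blast
  have sp: "space M = UNIV" using sets_eq_imp_space_eq[OF sets] by simp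
  show "\<exists>A. countable A \<and> A \<subseteq> sets M \<and> \<Union> A = space M \<and> (\<forall>a\<in>A. emeasure M a \<noteq> \<infinity>)"
  proof (intro exI conjI ballI)
    show "countable F'" by fact
    show "F' \<subseteq> sets M" using F'(1) sets by auto
    show "\<Union>F' = space M" using F'(3) cov sp by simp
    fix a assume "a \<in> F'"
    then obtain K where K: "open a" "compact K" "a \<subseteq> K" using F'(1) by blast
    have "emeasure M a \<le> emeasure M K"
      using K sets by (intro emeasure_mono) (auto intro!: borel_closed compact_imp_closed)
    also have "\<dots> < \<infinity>" using fin K by simp
    finally show "emeasure M a \<noteq> \<infinity>" by simp
  qed
qed

lemma grp_aux: "-(y + x) + y = -(x::'g::group_add)"
  by (simp add: minus_add add.assoc)

lemma fubini_trick:
  fixes \<mu> \<nu> :: "'g::{topological_group_add,metric_space,second_countable_topology} measure"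
  assumes s\<mu>: "sets \<mu> = sets borel" and s\<nu>: "sets \<nu> = sets borel"
    and sf\<mu>: "sigma_finite_measure \<mu>" and sf\<nu>: "sigma_finite_measure \<nu>"
    and l\<mu>: "linv \<mu>" and l\<nu>: "linv \<nu>"
    and u[measurable]: "u \<in> borel_measurable borel" and v[measurable]: "v \<in> borel_measurable borel"
  shows "(\<integral>\<^sup>+x. u x \<partial>\<mu>) * (\<integral>\<^sup>+y. v y \<partial>\<nu>) = (\<integral>\<^sup>+x. v (-x) * (\<integral>\<^sup>+y. u (y + x) \<partial>\<nu>) \<partial>\<mu>)"
proof -
  interpret P: pair_sigma_finite \<mu> \<nu> using sf\<mu> sf\<nu> by (simp add: pair_sigma_finite_def)
  have ms: "measurable (\<mu> \<Otimes>\<^sub>M \<nu>) N = measurable (borel \<Otimes>\<^sub>M borel) N" for N :: "ennreal measure"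
    by (rule measurable_cong_sets[OF sets_pair_measure_cong[OF s\<mu> s\<nu>] refl])
  have m1: "case_prod (\<lambda>x y. u x * v (-x + y)) \<in> borel_measurable (\<mu> \<Otimes>\<^sub>M \<nu>)"
    unfolding ms by (simp add: split_beta') measurable
  have m2: "case_prod (\<lambda>x y. u (y + x) * v (-x)) \<in> borel_measurable (\<mu> \<Otimes>\<^sub>M \<nu>)"
    unfolding ms by (simp add: split_beta') measurable
  have "(\<integral>\<^sup>+x. u x \<partial>\<mu>) * (\<integral>\<^sup>+y. v y \<partial>\<nu>) = (\<integral>\<^sup>+x. u x * (\<integral>\<^sup>+y. v y \<partial>\<nu>) \<partial>\<mu>)"
    by (simp add: nn_integral_multc measurable_cong_sets[OF s\<mu> refl])
  also have "\<dots> = (\<integral>\<^sup>+x. u x * (\<integral>\<^sup>+y. v (-x + y) \<partial>\<nu>) \<partial>\<mu>)"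
    using l\<nu> unfolding linv_def by simp
  also have "\<dots> = (\<integral>\<^sup>+x. \<integral>\<^sup>+y. u x * v (-x + y) \<partial>\<nu> \<partial>\<mu>)"
    by (intro nn_integral_cong nn_integral_cmult[symmetric]) (simp add: measurable_cong_sets[OF s\<nu> refl])
  also have "\<dots> = (\<integral>\<^sup>+y. \<integral>\<^sup>+x. u x * v (-x + y) \<partial>\<mu> \<partial>\<nu>)"
    using P.Fubini'[OF m1] by simp
  also have "\<dots> = (\<integral>\<^sup>+y. \<integral>\<^sup>+x. u (y + x) * v (-(y + x) + y) \<partial>\<mu> \<partial>\<nu>)"
  proof -
    have eq: "(\<integral>\<^sup>+x. u x * v (-x + y) \<partial>\<mu>) = (\<integral>\<^sup>+x. u (y + x) * v (-(y + x) + y) \<partial>\<mu>)" for y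
    proof -
      have mt: "(\<lambda>t. u t * v (-t + y)) \<in> borel_measurable borel" by measurable
      show ?thesis using l\<mu>[unfolded linv_def, rule_format, OF mt, where z=y] by simp
    qed
    show ?thesis by (simp only: eq)
  qed
  also have "\<dots> = (\<integral>\<^sup>+y. \<integral>\<^sup>+x. u (y + x) * v (-x) \<partial>\<mu> \<partial>\<nu>)"
    by (simp only: grp_aux)
  also have "\<dots> = (\<integral>\<^sup>+x. \<integral>\<^sup>+y. u (y + x) * v (-x) \<partial>\<nu> \<partial>\<mu>)"
    using P.Fubini'[OF m2] by simp
  also have "\<dots> = (\<integral>\<^sup>+x. v (-x) * (\<integral>\<^sup>+y. u (y + x) \<partial>\<nu>) \<partial>\<mu>)"
  proof (intro nn_integral_cong)
    fix x
    have "(\<lambda>y. u (y + x)) \<in> borel_measurable borel" by measurable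
    hence "(\<lambda>y. u (y + x)) \<in> borel_measurable \<nu>" using measurable_cong_sets[OF s\<nu> refl] by blast
    thus "(\<integral>\<^sup>+y. u (y + x) * v (-x) \<partial>\<nu>) = v (-x) * (\<integral>\<^sup>+y. u (y + x) \<partial>\<nu>)"
      by (simp add: nn_integral_cmult mult.commute[of _ "v (-x)"])
  qed
  finally show ?thesis .
qed
lemma haar_right_scale:
  fixes \<omega> :: "'g::{topological_group_add,metric_space,second_countable_topology} measure"
  assumes lc: "locally_compact_space (euclidean::'g topology)" and haar: "left_haar_measure \<omega>"
  shows "\<exists>c>0. \<forall>w::'g\<Rightarrow>ennreal. w \<in> borel_measurable borel \<longrightarrow>
           (\<integral>\<^sup>+x. w (x + g0) \<partial>\<omega>) = ennreal c * (\<integral>\<^sup>+x. w x \<partial>\<omega>)"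
proof -
  have sets: "sets \<omega> = sets borel" using haar by (simp add: left_haar_measure_def)
  have sp: "space \<omega> = UNIV" using sets_eq_imp_space_eq[OF sets] by simp
  have lo: "linv \<omega>" using haar by (rule haar_linv)
  have cfin: "\<And>K. compact K \<Longrightarrow> emeasure \<omega> K < \<infinity>" using haar by (simp add: left_haar_measure_def)
  have opos: "\<And>U. open U \<Longrightarrow> U \<noteq> {} \<Longrightarrow> emeasure \<omega> U > 0" using haar by (simp add: left_haar_measure_def)
  have sfo: "sigma_finite_measure \<omega>" using sigma_finite_lc[OF lc sets cfin] .
  have cimg: "compact ((\<lambda>y. y + a) ` K)" if "compact K" for K and a :: 'g
    by (intro compact_continuous_image continuous_intros that)
  have vim: "(\<lambda>y. y + a) -` K = (\<lambda>y. y + -a) ` K" for K and a :: 'g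
  proof (intro set_eqI iffI)
    fix x assume "x \<in> (\<lambda>y. y + a) -` K"
    then show "x \<in> (\<lambda>y. y + -a) ` K" by (intro image_eqI[of _ _ "x + a"]) (simp_all add: add.assoc)
  next
    fix x assume "x \<in> (\<lambda>y. y + -a) ` K"
    then show "x \<in> (\<lambda>y. y + a) -` K" by (auto simp: add.assoc)
  qed
  obtain U K where U: "open U" "compact K" "(0::'g) \<in> U" "U \<subseteq> K"
    using lc unfolding locally_compact_space_def
    by (metis UNIV_I open_openin topspace_euclidean compactin_euclidean_iff)
  have [measurable]: "U \<in> sets borel" using U by simp
  have pf: "0 < emeasure \<omega> {y. y + a \<in> U} \<and> emeasure \<omega> {y. y + a \<in> U} < \<infinity>" for a :: 'g
  proof
    have o: "open {y. y + a \<in> U}"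
      using continuous_open_vimage[OF U(1), of "\<lambda>y. y + a"] by (simp add: vimage_def continuous_intros)
    have "-a + a \<in> U" using U by simp
    hence ne: "{y. y + a \<in> U} \<noteq> {}" by blast
    show "0 < emeasure \<omega> {y. y + a \<in> U}" using opos[OF o ne] .
    have sub: "{y. y + a \<in> U} \<subseteq> (\<lambda>y. y + -a) ` K" using U(4) vim[of a K] by auto
    have "emeasure \<omega> {y. y + a \<in> U} \<le> emeasure \<omega> ((\<lambda>y. y + -a) ` K)"
      using sub cimg[OF U(2), of "-a"] sets o
      by (intro emeasure_mono) (auto intro!: borel_closed compact_imp_closed)
    also have "\<dots> < \<infinity>" using cfin[OF cimg[OF U(2), of "-a"]] by simp
    finally show "emeasure \<omega> {y. y + a \<in> U} < \<infinity>" .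
  qed
  define \<phi> where "\<phi> x = (\<integral>\<^sup>+y. indicator U (y + x) \<partial>\<omega>)" for x
  have \<phi>eq: "\<phi> x = emeasure \<omega> {y. y + x \<in> U}" for x
  proof -
    have "{y. y + x \<in> U} \<in> sets \<omega>" unfolding sets by measurable
    moreover have "(\<lambda>y. indicator U (y + x) :: ennreal) = indicator {y. y + x \<in> U}"
      by (auto simp: indicator_def)
    ultimately show ?thesis unfolding \<phi>_def by simp
  qed
  have \<phi>m[measurable]: "\<phi> \<in> borel_measurable borel"
  proof -
    have ms: "measurable (borel \<Otimes>\<^sub>M \<omega>) N = measurable (borel \<Otimes>\<^sub>M borel) N" for N :: "ennreal measure"
      by (rule measurable_cong_sets[OF sets_pair_measure_cong[OF refl sets] refl])
    have "case_prod (\<lambda>x y. indicator U (y + x) :: ennreal) \<in> borel_measurable (borel \<Otimes>\<^sub>M \<omega>)"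
      unfolding ms by (simp add: split_beta') measurable
    from sigma_finite_measure.borel_measurable_nn_integral[OF sfo this]
    show ?thesis unfolding \<phi>_def[abs_def] .
  qed
  define L where "L = distr \<omega> borel (\<lambda>x. x + g0)"
  have ml: "(\<lambda>x. x + g0) \<in> measurable \<omega> borel" using measurable_cong_sets[OF sets refl] meas_add_right by blast
  have intl: "(\<integral>\<^sup>+x. w x \<partial>L) = (\<integral>\<^sup>+x. w (x + g0) \<partial>\<omega>)" if "w \<in> borel_measurable borel" for w :: "'g \<Rightarrow> ennreal"
    unfolding L_def using that ml by (simp add: nn_integral_distr)
  have sl: "sets L = sets borel" by (simp add: L_def)
  have ll: "linv L" unfolding linv_def
  proof (intro allI impI)
    fix z and w :: "'g \<Rightarrow> ennreal" assume [measurable]: "w \<in> borel_measurable borel"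
    have m2: "(\<lambda>t. w (t + g0)) \<in> borel_measurable borel" by measurable
    have "(\<integral>\<^sup>+x. w (z + x) \<partial>L) = (\<integral>\<^sup>+x. w (z + (x + g0)) \<partial>\<omega>)" by (subst intl, measurable)
    also have "\<dots> = (\<integral>\<^sup>+x. (\<lambda>t. w (t + g0)) (z + x) \<partial>\<omega>)" by (simp add: add.assoc)
    also have "\<dots> = (\<integral>\<^sup>+x. w (x + g0) \<partial>\<omega>)" using lo[unfolded linv_def, rule_format, OF m2] by simp
    also have "\<dots> = (\<integral>\<^sup>+x. w x \<partial>L)" by (simp add: intl)
    finally show "(\<integral>\<^sup>+x. w (z + x) \<partial>L) = (\<integral>\<^sup>+x. w x \<partial>L)" .
  qed
  have sfl: "sigma_finite_measure L"
  proof (rule sigma_finite_lc[OF lc sl])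
    fix K' :: "'g set" assume K': "compact K'"
    have "K' \<in> sets borel" using K' by (auto intro!: borel_closed compact_imp_closed)
    hence "emeasure L K' = emeasure \<omega> ((\<lambda>x. x + g0) -` K')"
      unfolding L_def using ml by (simp add: emeasure_distr sp)
    also have "\<dots> < \<infinity>" unfolding vim using cfin[OF cimg[OF K', of "-g0"]] by simp
    finally show "emeasure L K' < \<infinity>" .
  qed
  define c where "c = enn2real (\<phi> g0) / enn2real (\<phi> 0)"
  have \<phi>r: "\<phi> x = ennreal (enn2real (\<phi> x))" "enn2real (\<phi> x) > 0" for x
    using pf[of x] unfolding \<phi>eq by (auto simp: enn2real_positive_iff less_top[symmetric])
  have cpos: "c > 0" unfolding c_def using \<phi>r by simp
  show ?thesis
  proof (intro exI[of _ c] conjI allI impI cpos)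
    fix w :: "'g \<Rightarrow> ennreal" assume wm[measurable]: "w \<in> borel_measurable borel"
    define v where "v t = w (-t) * ennreal (1 / enn2real (\<phi> (-t)))" for t
    have vm[measurable]: "v \<in> borel_measurable borel" unfolding v_def[abs_def] by measurable
    have key: "v (-x) * \<phi> x = w x" for x
    proof -
      have "v (-x) * \<phi> x = w x * (ennreal (1 / enn2real (\<phi> x)) * ennreal (enn2real (\<phi> x)))"
        unfolding v_def by (subst \<phi>r(1)[of x]) (simp add: mult.assoc)
      also have "\<dots> = w x" using \<phi>r(2)[of x] by (simp add: ennreal_mult''[symmetric])
      finally show ?thesis .
    qed
    have iU: "indicator U \<in> borel_measurable borel" by measurable
    have A1: "\<phi> 0 * (\<integral>\<^sup>+x. v x \<partial>\<omega>) = (\<integral>\<^sup>+x. w x \<partial>\<omega>)"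
    proof -
      have "\<phi> 0 = (\<integral>\<^sup>+x. indicator U x \<partial>\<omega>)" by (simp add: \<phi>_def)
      moreover have "(\<integral>\<^sup>+x. indicator U x \<partial>\<omega>) * (\<integral>\<^sup>+x. v x \<partial>\<omega>) = (\<integral>\<^sup>+x. v (-x) * \<phi> x \<partial>\<omega>)"
        using fubini_trick[OF sets sets sfo sfo lo lo iU vm] by (simp add: \<phi>_def)
      ultimately show ?thesis by (simp add: key)
    qed
    have A2: "\<phi> g0 * (\<integral>\<^sup>+x. v x \<partial>\<omega>) = (\<integral>\<^sup>+x. w (x + g0) \<partial>\<omega>)"
    proof -
      have "\<phi> g0 = (\<integral>\<^sup>+x. indicator U x \<partial>L)" by (simp add: \<phi>_def intl)
      moreover have "(\<integral>\<^sup>+x. indicator U x \<partial>L) * (\<integral>\<^sup>+x. v x \<partial>\<omega>) = (\<integral>\<^sup>+x. v (-x) * \<phi> x \<partial>L)"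
        using fubini_trick[OF sl sets sfl sfo ll lo iU vm] by (simp add: \<phi>_def)
      ultimately show ?thesis by (simp add: key intl)
    qed
    have "ennreal c * \<phi> 0 = \<phi> g0"
    proof -
      have r0: "enn2real (\<phi> 0) > 0" by (rule \<phi>r(2))
      have "ennreal c * \<phi> 0 = ennreal c * ennreal (enn2real (\<phi> 0))" by (subst \<phi>r(1)[of 0]) (rule refl)
      also have "\<dots> = ennreal (c * enn2real (\<phi> 0))" using cpos r0 by (simp add: ennreal_mult)
      also have "c * enn2real (\<phi> 0) = enn2real (\<phi> g0)" using r0 unfolding c_def by simp
      also have "ennreal (enn2real (\<phi> g0)) = \<phi> g0" using \<phi>r(1)[of g0] by simp
      finally show ?thesis .
    qed
    then show "(\<integral>\<^sup>+x. w (x + g0) \<partial>\<omega>) = ennreal c * (\<integral>\<^sup>+x. w x \<partial>\<omega>)"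
      by (simp add: A1[symmetric] A2[symmetric] mult.assoc[symmetric])
  qed
qed
lemma act_meas:
  fixes act :: "'g::{topological_group_add,metric_space,second_countable_topology} \<Rightarrow> 'y::{metric_space,second_countable_topology} \<Rightarrow> 'y"
  assumes act_cont: "continuous_on UNIV (\<lambda>(g, y). act g y)"
  shows "(\<lambda>g. act g y) \<in> borel_measurable borel" "(\<lambda>y. act g y) \<in> borel_measurable borel"
    "(\<lambda>p. act (snd p) (fst p)) \<in> borel_measurable (borel \<Otimes>\<^sub>M borel)"
proof -
  have c: "continuous_on UNIV (\<lambda>p. act (fst p) (snd p))" using act_cont by (simp add: split_beta')
  have "continuous_on UNIV ((\<lambda>p. act (fst p) (snd p)) \<circ> (\<lambda>g. (g, y)))"
    by (rule continuous_on_compose) (auto intro!: continuous_intros continuous_on_subset[OF c])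
  thus "(\<lambda>g. act g y) \<in> borel_measurable borel" by (intro borel_measurable_continuous_onI) (simp add: o_def)
  have "continuous_on UNIV ((\<lambda>p. act (fst p) (snd p)) \<circ> (\<lambda>y. (g, y)))"
    by (rule continuous_on_compose) (auto intro!: continuous_intros continuous_on_subset[OF c])
  thus "(\<lambda>y. act g y) \<in> borel_measurable borel" by (intro borel_measurable_continuous_onI) (simp add: o_def)
  have "continuous_on UNIV ((\<lambda>p. act (fst p) (snd p)) \<circ> (\<lambda>p. (snd p, fst p)))"
    by (rule continuous_on_compose) (auto intro!: continuous_intros continuous_on_subset[OF c])
  hence "(\<lambda>p. act (snd p) (fst p)) \<in> borel_measurable borel" by (intro borel_measurable_continuous_onI) (simp add: o_def)
  thus "(\<lambda>p. act (snd p) (fst p)) \<in> borel_measurable (borel \<Otimes>\<^sub>M borel)" by (simp add: borel_prod)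
qed

lemma R_invariant:
  fixes \<omega> :: "'g::{topological_group_add,metric_space,second_countable_topology} measure"
    and act :: "'g \<Rightarrow> 'y::{metric_space,second_countable_topology} \<Rightarrow> 'y"
  assumes lc: "locally_compact_space (euclidean :: 'g topology)"
    and haar: "left_haar_measure \<omega>"
    and act_cont: "continuous_on UNIV (\<lambda>(g, y). act g y)"
    and act_comp: "\<And>g1 g2 y. act (g1 + g2) y = act g1 (act g2 y)"
    and mult: "multiplier chi"
    and fm[measurable]: "f \<in> borel_measurable borel" and f_nonneg: "\<And>y. f y \<ge> 0"
    and hm[measurable]: "h \<in> borel_measurable borel"
  shows "R_op \<omega> act f chi h (act g0 y) = R_op \<omega> act f chi h y"
proof -
  have sets: "sets \<omega> = sets borel" using haar by (simp add: left_haar_measure_def)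
  have sp: "space \<omega> = UNIV" using sets_eq_imp_space_eq[OF sets] by simp
  have mb: "F \<in> borel_measurable \<omega>" if "F \<in> borel_measurable borel" for F :: "'g \<Rightarrow> 'b::topological_space"
    using that measurable_cong_sets[OF sets refl] by blast
  note am[measurable] = act_meas[OF act_cont]
  have chim[measurable]: "chi \<in> borel_measurable borel"
    using mult by (intro borel_measurable_continuous_onI) (simp add: multiplier_def)
  have chipos: "\<And>g. chi g > 0" and chimul: "\<And>a b. chi (a + b) = chi a * chi b"
    using mult by (auto simp: multiplier_def)
  obtain c where cpos: "c > 0" and sc: "\<And>w::'g\<Rightarrow>ennreal. w \<in> borel_measurable borel \<Longrightarrow>
           (\<integral>\<^sup>+x. w (x + g0) \<partial>\<omega>) = ennreal c * (\<integral>\<^sup>+x. w x \<partial>\<omega>)"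
    using haar_right_scale[OF lc haar, of g0] by blast
  have ml: "(\<lambda>x. x + g0) \<in> measurable \<omega> borel" using mb[OF meas_add_right] .
  have D: "distr \<omega> borel (\<lambda>x. x + g0) = density \<omega> (\<lambda>_. ennreal c)"
  proof (rule measure_eqI)
    show "sets (distr \<omega> borel (\<lambda>x. x + g0)) = sets (density \<omega> (\<lambda>_. ennreal c))" using sets by simp
    fix A assume "A \<in> sets (distr \<omega> borel (\<lambda>x. x + g0))"
    hence A[measurable]: "A \<in> sets borel" by simp
    have "emeasure (distr \<omega> borel (\<lambda>x. x + g0)) A = (\<integral>\<^sup>+x. indicator A x \<partial>distr \<omega> borel (\<lambda>x. x + g0))"
      by (rule nn_integral_indicator[symmetric]) simp
    also have "\<dots> = (\<integral>\<^sup>+x. indicator A (x + g0) \<partial>\<omega>)" by (rule nn_integral_distr[OF ml]) measurable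
    also have "\<dots> = ennreal c * (\<integral>\<^sup>+x. indicator A x \<partial>\<omega>)" by (rule sc) measurable
    also have "\<dots> = emeasure (density \<omega> (\<lambda>_. ennreal c)) A"
      using A sets by (simp add: nn_integral_indicator emeasure_density_const)
    finally show "emeasure (distr \<omega> borel (\<lambda>x. x + g0)) A = emeasure (density \<omega> (\<lambda>_. ennreal c)) A" .
  qed
  define H where "H t = h (act t y) * f (act t y) * chi t" for t
  have Hm[measurable]: "H \<in> borel_measurable borel" unfolding H_def[abs_def] by measurable
  have inv: "chi g = chi (g + g0) * chi (-g0)" for g
    using chimul[of "g + g0" "-g0"] by (simp add: add.assoc)
  have N: "(LINT g|\<omega>. h (act g (act g0 y)) * f (act g (act g0 y)) * chi g) = chi (-g0) * c * (LINT g|\<omega>. H g)"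
  proof -
    have "(LINT g|\<omega>. h (act g (act g0 y)) * f (act g (act g0 y)) * chi g) = (LINT g|\<omega>. chi (-g0) * H (g + g0))"
    proof (intro Bochner_Integration.integral_cong refl)
      fix x
      show "h (act x (act g0 y)) * f (act x (act g0 y)) * chi x = chi (-g0) * H (x + g0)"
        by (simp only: H_def act_comp inv[of x] mult_ac)
    qed
    also have "\<dots> = chi (-g0) * (LINT g|\<omega>. H (g + g0))" by simp
    also have "(LINT g|\<omega>. H (g + g0)) = (LINT g|distr \<omega> borel (\<lambda>x. x + g0). H g)"
      using ml by (simp add: integral_distr)
    also have "\<dots> = (LINT g|\<omega>. c *\<^sub>R H g)" unfolding D
      using cpos by (intro integral_density) (auto intro: mb)
    finally show ?thesis by simp
  qed
  define M where "M t = ennreal (f (act t y) * chi t)" for t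
  have Mm[measurable]: "M \<in> borel_measurable borel" unfolding M_def[abs_def] by measurable
  have Mf: "m_fun \<omega> act f chi (act g0 y) = ennreal (chi (-g0)) * ennreal c * m_fun \<omega> act f chi y"
  proof -
    have "m_fun \<omega> act f chi (act g0 y) = (\<integral>\<^sup>+g. ennreal (chi (-g0)) * M (g + g0) \<partial>\<omega>)"
      unfolding m_fun_def M_def
    proof (intro nn_integral_cong)
      fix g
      have "f (act g (act g0 y)) * chi g = chi (-g0) * (f (act (g + g0) y) * chi (g + g0))"
        by (simp only: act_comp inv[of g] mult_ac)
      thus "ennreal (f (act g (act g0 y)) * chi g) = ennreal (chi (-g0)) * ennreal (f (act (g + g0) y) * chi (g + g0))"
        using f_nonneg chipos by (simp add: ennreal_mult less_imp_le)
    qed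
    also have "\<dots> = ennreal (chi (-g0)) * (\<integral>\<^sup>+g. M (g + g0) \<partial>\<omega>)"
      by (rule nn_integral_cmult, rule mb) measurable
    also have "(\<integral>\<^sup>+g. M (g + g0) \<partial>\<omega>) = ennreal c * m_fun \<omega> act f chi y"
      unfolding sc[OF Mm] by (simp add: m_fun_def M_def[abs_def])
    finally show ?thesis by (simp add: mult.assoc)
  qed
  have k: "chi (-g0) > 0" by (rule chipos)
  have e: "enn2real (m_fun \<omega> act f chi (act g0 y)) = chi (-g0) * c * enn2real (m_fun \<omega> act f chi y)"
    unfolding Mf using k cpos by (simp add: enn2real_mult)
  show ?thesis
  proof -
    have I: "(LINT g|\<omega>. h (act g y) * f (act g y) * chi g) = (LINT g|\<omega>. H g)" by (simp add: H_def)
    show ?thesis unfolding R_op_def e N I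
      by (cases "enn2real (m_fun \<omega> act f chi y) = 0") (use k cpos in auto)
  qed
qed


theorem lemma2:
  fixes \<nu> :: "'y::{metric_space,second_countable_topology} measure"
    and f :: "'y \<Rightarrow> real"
    and \<omega> :: "'g::{topological_group_add,metric_space,second_countable_topology} measure"
    and act :: "'g \<Rightarrow> 'y \<Rightarrow> 'y"
    and chi :: "'g \<Rightarrow> real"
  assumes Y_lc: "locally_compact_space (euclidean :: 'y topology)"
    and nu_borel: "sets \<nu> = sets borel"
    and f_meas: "f \<in> borel_measurable \<nu>"
    and f_nonneg: "\<And>y. f y \<ge> 0"
    and f_prob: "(\<integral>\<^sup>+ y. ennreal (f y) \<partial>\<nu>) = 1"
    and G_lc: "locally_compact_space (euclidean :: 'g topology)"
    and haar: "left_haar_measure \<omega>"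
    and act_cont: "continuous_on UNIV (\<lambda>(g, y). act g y)"
    and act_id: "\<And>y. act 0 y = y"
    and act_comp: "\<And>g1 g2 y. act (g1 + g2) y = act g1 (act g2 y)"
    and mult: "multiplier chi"
    and rel_inv: "rel_left_invariant \<nu> act chi"
    and m_pos: "\<And>y. m_fun \<omega> act f chi y > 0"
    and m_fin: "AE y in \<nu>. m_fun \<omega> act f chi y < \<infinity>"
    and norm_one: "opnorm_sq \<nu> f (R_op \<omega> act f chi) = 1"
  shows "\<forall>h \<in> L20 \<nu> f.
           (\<exists>h' \<in> L20 \<nu> f. AE y in density \<nu> f. h y = R_op \<omega> act f chi h' y)
           \<longleftrightarrow> (\<exists>h''. (AE y in density \<nu> f. h y = h'' y) \<and> (\<forall>g y. h'' (act g y) = h'' y))"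
proof -
  have spY: "space \<nu> = UNIV" using sets_eq_imp_space_eq[OF nu_borel] by simp
  have mbY: "F \<in> borel_measurable \<nu> \<longleftrightarrow> F \<in> borel_measurable borel" for F :: "'y \<Rightarrow> 'b::topological_space"
    using measurable_cong_sets[OF nu_borel refl] by blast
  have sG: "sets \<omega> = sets borel" using haar by (simp add: left_haar_measure_def)
  have spG: "space \<omega> = UNIV" using sets_eq_imp_space_eq[OF sG] by simp
  have mbG: "F \<in> borel_measurable \<omega> \<longleftrightarrow> F \<in> borel_measurable borel" for F :: "'g \<Rightarrow> 'b::topological_space"
    using measurable_cong_sets[OF sG refl] by blast
  have fm[measurable]: "f \<in> borel_measurable borel" using f_meas mbY by blast
  note am[measurable] = act_meas[OF act_cont]
  have chim[measurable]: "chi \<in> borel_measurable borel"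
    using mult by (intro borel_measurable_continuous_onI) (simp add: multiplier_def)
  have chipos: "\<And>g. chi g > 0" using mult by (auto simp: multiplier_def)
  have Rinv: "\<And>h g y. h \<in> borel_measurable borel \<Longrightarrow> R_op \<omega> act f chi h (act g y) = R_op \<omega> act f chi h y"
    by (rule R_invariant[OF G_lc haar act_cont act_comp mult fm f_nonneg])
  let ?D = "density \<nu> (\<lambda>x. ennreal (f x))"
  have fem: "(\<lambda>x. ennreal (f x)) \<in> borel_measurable \<nu>" unfolding mbY by measurable
  show ?thesis
  proof (intro ballI iffI)
    fix h assume hL: "h \<in> L20 \<nu> f"
    {
      assume "\<exists>h'\<in>L20 \<nu> f. AE y in ?D. h y = R_op \<omega> act f chi h' y"
      then obtain h' where h'L: "h' \<in> L20 \<nu> f" and ae: "AE y in ?D. h y = R_op \<omega> act f chi h' y" by blast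
      have "h' \<in> borel_measurable borel" using h'L mbY[of h'] by (simp add: L20_def)
      then show "\<exists>h''. (AE y in ?D. h y = h'' y) \<and> (\<forall>g y. h'' (act g y) = h'' y)"
        using ae Rinv by blast
    }
    {
      assume "\<exists>h''. (AE y in ?D. h y = h'' y) \<and> (\<forall>g y. h'' (act g y) = h'' y)"
      then obtain h'' where aeh: "AE y in ?D. h y = h'' y" and hinv: "\<And>g y. h'' (act g y) = h'' y" by blast
      have hm[measurable]: "h \<in> borel_measurable borel" using hL mbY[of h] by (simp add: L20_def)
      have "AE y in \<nu>. 0 < ennreal (f y) \<longrightarrow> h y = h'' y" using aeh unfolding AE_density[OF fem] .
      then obtain N where N: "{y\<in>space \<nu>. \<not>(0 < ennreal (f y) \<longrightarrow> h y = h'' y)} \<subseteq> N"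
        "emeasure \<nu> N = 0" "N \<in> sets \<nu>" by (rule AE_E)
      have Nb[measurable]: "N \<in> sets borel" using N(3) nu_borel by simp
      have each: "AE y in \<nu>. act g y \<notin> N" for g
      proof -
        have int: "integrable \<nu> (indicator N :: 'y \<Rightarrow> real)" using N by (intro integrable_real_indicator) auto
        from rel_inv[unfolded rel_left_invariant_def, rule_format, OF int, of g]
        have i2: "integrable \<nu> (\<lambda>y. indicator N (act g y) :: real)"
          and eq: "chi g * (LINT y|\<nu>. indicator N (act g y)) = (LINT y|\<nu>. indicator N y :: real)" by auto
        have "(LINT y|\<nu>. indicator N y :: real) = 0" using N by (simp add: measure_def)
        hence "(LINT y|\<nu>. indicator N (act g y) :: real) = 0" using eq chipos[of g] by simp
        hence "AE y in \<nu>. (indicator N (act g y) :: real) = 0"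
          using integral_nonneg_eq_0_iff_AE[OF i2] by simp
        thus ?thesis by (auto simp: indicator_def)
      qed
      have sfG: "sigma_finite_measure \<omega>"
        using sigma_finite_lc[OF G_lc sG] haar by (simp add: left_haar_measure_def)
      have fD: "finite_measure ?D"
      proof
        have "emeasure ?D (space ?D) = (\<integral>\<^sup>+x. ennreal (f x) \<partial>\<nu>)"
          using fem by (auto simp: emeasure_density intro!: nn_integral_cong)
        thus "emeasure ?D (space ?D) \<noteq> \<infinity>" using f_prob by simp
      qed
      interpret P: pair_sigma_finite ?D \<omega>
        using fD sfG by (simp add: pair_sigma_finite_def finite_measure.sigma_finite_measure)
      define F where "F y g = (indicator N (act g y) :: ennreal)" for y g
      have Fm: "case_prod F \<in> borel_measurable (?D \<Otimes>\<^sub>M \<omega>)"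
      proof -
        have ms: "measurable (?D \<Otimes>\<^sub>M \<omega>) M = measurable (borel \<Otimes>\<^sub>M borel) M" for M :: "ennreal measure"
          by (rule measurable_cong_sets[OF sets_pair_measure_cong[OF _ sG] refl]) (simp add: nu_borel)
        have "(\<lambda>p. indicator N (act (snd p) (fst p)) :: ennreal) \<in> borel_measurable (borel \<Otimes>\<^sub>M borel)"
          by (rule measurable_compose[OF am(3)]) simp
        thus ?thesis unfolding ms F_def by (simp add: split_beta')
      qed
      have inner0: "(\<integral>\<^sup>+y. F y g \<partial>?D) = 0" for g
      proof -
        have "AE y in ?D. F y g = 0"
          unfolding AE_density[OF fem] using each[of g] by eventually_elim (simp add: F_def)
        hence "(\<integral>\<^sup>+y. F y g \<partial>?D) = (\<integral>\<^sup>+y. 0 \<partial>?D)" by (rule nn_integral_cong_AE)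
        thus ?thesis by simp
      qed
      have "(\<integral>\<^sup>+y. (\<integral>\<^sup>+g. F y g \<partial>\<omega>) \<partial>?D) = 0"
        using P.Fubini'[OF Fm] inner0 by simp
      hence aeD: "AE y in ?D. (\<integral>\<^sup>+g. F y g \<partial>\<omega>) = 0"
        using nn_integral_0_iff_AE[OF P.M2.borel_measurable_nn_integral[OF Fm]] by simp
      have aem: "AE y in ?D. m_fun \<omega> act f chi y < \<infinity>"
        unfolding AE_density[OF fem] using m_fin by eventually_elim simp
      have pt: "h y = R_op \<omega> act f chi h y"
        if hy: "h y = h'' y" and my: "m_fun \<omega> act f chi y < \<infinity>" and Fy: "(\<integral>\<^sup>+g. F y g \<partial>\<omega>) = 0" for y
      proof -
        have Fym: "F y \<in> borel_measurable \<omega>" unfolding mbG F_def by measurable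
        have aeg: "AE g in \<omega>. act g y \<notin> N"
          using Fy unfolding nn_integral_0_iff_AE[OF Fym] by eventually_elim (simp add: F_def indicator_def split: if_splits)
        have ae2: "AE g in \<omega>. h (act g y) * f (act g y) * chi g = h y * (f (act g y) * chi g)"
          using aeg
        proof eventually_elim
          case (elim g)
          show ?case
          proof (cases "f (act g y) = 0")
            case False
            hence "0 < ennreal (f (act g y))" using f_nonneg[of "act g y"] by simp
            hence "h (act g y) = h'' (act g y)" using N(1) elim spY by auto
            thus ?thesis using hy hinv by simp
          qed simp
        qed
        have "(LINT g|\<omega>. h (act g y) * f (act g y) * chi g) = (LINT g|\<omega>. h y * (f (act g y) * chi g))"
          by (rule integral_cong_AE) (use ae2 in \<open>auto simp: mbG\<close>)
        also have "\<dots> = h y * (LINT g|\<omega>. f (act g y) * chi g)" by simp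
        also have "(LINT g|\<omega>. f (act g y) * chi g) = enn2real (m_fun \<omega> act f chi y)"
          unfolding m_fun_def
          by (rule integral_eq_nn_integral) (auto simp: mbG f_nonneg chipos less_imp_le)
        finally have I: "(LINT g|\<omega>. h (act g y) * f (act g y) * chi g) = h y * enn2real (m_fun \<omega> act f chi y)" .
        have "enn2real (m_fun \<omega> act f chi y) \<noteq> 0"
          using m_pos[of y] my by (auto simp: enn2real_eq_0_iff)
        thus ?thesis unfolding R_op_def I by simp
      qed
      have "AE y in ?D. h y = R_op \<omega> act f chi h y"
        using aeh aem aeD by eventually_elim (rule pt)
      thus "\<exists>h'\<in>L20 \<nu> f. AE y in ?D. h y = R_op \<omega> act f chi h' y" using hL by blast
    }
  qed
qed

end
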